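(* Let $p$ be a prime. Then $$I_{p^{p+1}}=\Big(p,\prod_{i=0}^{p-1}(X-i)\Big)^{p+1}+\big(H(X)\big),\qquad H(X)=\prod_{i=0}^{p^2-1}(X-i).$$
   Context: $I_{p^n}=p^n\mathrm{Int}(\mathbb{Z})\cap\mathbb{Z}[X]=\{f\in\mathbb{Z}[X] : p^n\mid f(a)\text{ for all }a\in\mathbb{Z}\}$, where $\mathrm{Int}(\mathbb{Z})=\{f\in\mathbb{Q}[X]: f(\mathbb{Z})\subseteq\mathbb{Z}\}$. *)

theory Defs
  imports "HOL-Computational_Algebra.Polynomial"
begin

definition is_ideal :: "'a::comm_ring_1 set \<Rightarrow> bool" where
  "is_ideal J \<longleftrightarrow> 0 \<in> J \<and> (\<forall>x\<in>J. \<forall>y\<in>J. x + y \<in> J) \<and> (\<forall>r. \<forall>x\<in>J. r * x \<in> J)"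

definition ideal_gen :: "'a::comm_ring_1 set \<Rightarrow> 'a set" where
  "ideal_gen S = \<Inter>{J. is_ideal J \<and> S \<subseteq> J}"

definition ideal_sum :: "'a::comm_ring_1 set \<Rightarrow> 'a set \<Rightarrow> 'a set" where
  "ideal_sum I J = ideal_gen (I \<union> J)"

definition ideal_prod :: "'a::comm_ring_1 set \<Rightarrow> 'a set \<Rightarrow> 'a set" where
  "ideal_prod I J = ideal_gen {a * b | a b. a \<in> I \<and> b \<in> J}"

fun ideal_pow :: "'a::comm_ring_1 set \<Rightarrow> nat \<Rightarrow> 'a set" where
  "ideal_pow I 0 = UNIV"
| "ideal_pow I (Suc n) = ideal_prod I (ideal_pow I n)"

definition I_div :: "int \<Rightarrow> int poly set" where
  "I_div m = {f. \<forall>a::int. m dvd poly f a}"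

end

theory Submission
  imports Defs
begin

lemma is_ideal_gen: "is_ideal (ideal_gen S)"
  unfolding is_ideal_def ideal_gen_def by auto
lemma gen_sub: "S \<subseteq> ideal_gen S" unfolding ideal_gen_def by auto
lemma gen_least: "is_ideal J \<Longrightarrow> S \<subseteq> J \<Longrightarrow> ideal_gen S \<subseteq> J" unfolding ideal_gen_def by auto
lemma ideal_mult: "is_ideal J \<Longrightarrow> x \<in> J \<Longrightarrow> r * x \<in> J" by (simp add: is_ideal_def)
lemma ideal_mult_right: "is_ideal J \<Longrightarrow> x \<in> J \<Longrightarrow> x * r \<in> J"
  using ideal_mult[of J x r] by (simp add: mult.commute)
lemma ideal_add: "is_ideal J \<Longrightarrow> x \<in> J \<Longrightarrow> y \<in> J \<Longrightarrow> x + y \<in> J" by (simp add: is_ideal_def)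
lemma ideal_sum_closed:
  assumes "is_ideal J" "finite A" "\<And>i. i\<in>A \<Longrightarrow> f i \<in> J" shows "sum f A \<in> J"
  using assms(2,3) by (induction A rule: finite_induct) (use assms(1) in \<open>auto simp: is_ideal_def\<close>)
lemma is_ideal_pow: "is_ideal (ideal_pow I n)"
proof (cases n)
  case 0 then show ?thesis by (simp add: is_ideal_def)
next
  case (Suc m) then show ?thesis by (simp add: ideal_prod_def is_ideal_gen)
qed
lemma pow_Suc_mem: "x \<in> I \<Longrightarrow> y \<in> ideal_pow I n \<Longrightarrow> x * y \<in> ideal_pow I (Suc n)"
  unfolding ideal_pow.simps ideal_prod_def by (rule subsetD[OF gen_sub]) blast
lemma pow_scale: "c \<in> I \<Longrightarrow> y \<in> ideal_pow I q \<Longrightarrow> c^m * y \<in> ideal_pow I (q+m)"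
proof (induction m)
  case (Suc m)
  have "c*(c^m*y) \<in> ideal_pow I (Suc (q+m))" by (rule pow_Suc_mem) (use Suc in auto)
  then show ?case by (simp add: mult.assoc)
qed simp

lemma I_div_ideal: "is_ideal (I_div m)"
  unfolding is_ideal_def I_div_def by auto

lemma prod_sub_I_div: "A \<subseteq> I_div a \<Longrightarrow> B \<subseteq> I_div b \<Longrightarrow> ideal_prod A B \<subseteq> I_div (a*b)"
  unfolding ideal_prod_def by (rule gen_least[OF I_div_ideal]) (auto simp: I_div_def mult_dvd_mono subset_iff)

lemma pow_sub: "A \<subseteq> I_div a \<Longrightarrow> ideal_pow A n \<subseteq> I_div (a^n)"
proof (induction n)
  case 0 then show ?case by (auto simp: I_div_def)
next
  case (Suc n)
  have "ideal_prod A (ideal_pow A n) \<subseteq> I_div (a * a^n)" by (rule prod_sub_I_div) (use Suc in auto)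
  then show ?case by simp
qed

lemma prod_split: "(\<Prod>i<(a::nat)+b. g i) = (\<Prod>i<a. g i) * (\<Prod>r<b. g (a+r))"
  by (induction b) (simp_all add: mult.assoc)

lemma prod_group: "(\<Prod>i<(q::nat)*p. g i) = (\<Prod>j<q. \<Prod>r<p. g (j*p+r))"
proof (induction q)
  case (Suc q)
  have "(\<Prod>i<Suc q*p. g i) = (\<Prod>i<q*p+p. g i)" by (simp add: add.commute)
  also have "\<dots> = (\<Prod>i<q*p. g i) * (\<Prod>r<p. g (q*p+r))" by (rule prod_split)
  finally show ?case using Suc by simp
qed simp

lemma consec_dvd:
  assumes "0 < p"
  shows "int p dvd (\<Prod>i<p. a - int i)"
proof -
  define i0 where "i0 = nat (a mod int p)"
  have i0: "int i0 = a mod int p" unfolding i0_def using assms by simp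
  have "i0 < p" unfolding i0_def using assms by (simp add: nat_less_iff)
  have "int p dvd a - int i0" using i0 by simp
  also have "\<dots> dvd (\<Prod>i<p. a - int i)" by (rule dvd_prodI) (use \<open>i0 < p\<close> in auto)
  finally show ?thesis .
qed

lemma H_dvd:
  assumes "prime p"
  shows "int p ^ (p+1) dvd (\<Prod>i<p^2. a - int i)"
proof -
  have p0: "0 < p" using assms prime_gt_0_nat by blast
  define r0 where "r0 = nat (a mod int p)"
  define t where "t = a div int p"
  have r0: "int r0 = a mod int p" unfolding r0_def using p0 by simp
  have "r0 < p" unfolding r0_def using p0 by (simp add: nat_less_iff)
  have a: "a = int p * t + int r0" unfolding t_def r0 by simp
  have e1: "(\<Prod>i<p^2. a - int i) = (\<Prod>j<p. \<Prod>r<p. a - int (j*p+r))"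
    unfolding power2_eq_square by (rule prod_group)
  have d2: "(\<Prod>j<p. a - int (j*p+r0)) dvd (\<Prod>j<p. \<Prod>r<p. a - int (j*p+r))"
    by (rule prod_dvd_prod, rule dvd_prodI) (use \<open>r0 < p\<close> in auto)
  have e3: "(\<Prod>j<p. a - int (j*p+r0)) = (\<Prod>j<p. int p * (t - int j))"
  proof (rule prod.cong)
    fix j show "a - int (j*p+r0) = int p * (t - int j)" unfolding a by (simp add: algebra_simps)
  qed simp
  have e4: "(\<Prod>j<p. int p * (t - int j)) = int p ^ p * (\<Prod>j<p. t - int j)"
    by (simp add: prod.distrib)
  have d5: "int p ^ (p+1) dvd int p ^ p * (\<Prod>j<p. t - int j)"
    using consec_dvd[OF p0, of t] by (simp add: mult_dvd_mono)
  have "int p ^ (p+1) dvd (\<Prod>j<p. a - int (j*p+r0))" using d5 e3 e4 by simp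
  then show ?thesis unfolding e1 using d2 by (rule dvd_trans)
qed

definition ff :: "nat \<Rightarrow> int poly" where "ff k = (\<Prod>i<k. [:- int i, 1:])"

lemma poly_ff: "poly (ff k) x = (\<Prod>i<k. x - int i)"
  by (simp add: ff_def poly_prod)

lemma ff_Suc: "ff (Suc k) = ff k * [:- int k, 1:]"
  by (simp add: ff_def)

lemma ff_deg: "degree (ff k) = k \<and> coeff (ff k) k = 1"
proof (induction k)
  case 0 then show ?case by (simp add: ff_def)
next
  case (Suc k)
  have nz: "ff k \<noteq> 0" using Suc by auto
  have l: "[:- int k, 1:] \<noteq> 0" "degree [:- int k, 1:] = 1" "coeff [:- int k, 1:] 1 = 1" by simp_all
  have "degree (ff k * [:- int k, 1:]) = degree (ff k) + degree [:- int k, 1:]"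
    by (rule degree_mult_eq[OF nz l(1)])
  then have "degree (ff (Suc k)) = Suc k" unfolding ff_Suc using Suc l by simp
  moreover have "coeff (ff k * [:- int k, 1:]) (degree (ff k) + degree [:- int k, 1:])
     = coeff (ff k) (degree (ff k)) * coeff [:- int k, 1:] (degree [:- int k, 1:])"
    by (rule coeff_mult_degree_sum)
  then have "coeff (ff (Suc k)) (Suc k) = 1" unfolding ff_Suc using Suc l by simp
  ultimately show ?case by simp
qed

lemma deg_drop: "degree (g::int poly) \<le> Suc n \<Longrightarrow> coeff g (Suc n) = 0 \<Longrightarrow> degree g \<le> n"
  by (metis le_SucE leading_coeff_0_iff degree_0 le0)

lemma ff_expand: "degree f \<le> n \<Longrightarrow> \<exists>c. f = (\<Sum>k\<le>n. smult (c k) (ff k))"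
proof (induction n arbitrary: f)
  case 0
  then have "f = [:coeff f 0:]" using degree_0_id[of f] by simp
  then show ?case by (intro exI[of _ "\<lambda>_. coeff f 0"]) (simp add: ff_def)
next
  case (Suc n)
  define g where "g = f - smult (coeff f (Suc n)) (ff (Suc n))"
  have "degree g \<le> Suc n" unfolding g_def using Suc.prems ff_deg[of "Suc n"]
    by (metis degree_diff_le degree_smult_le order_trans)
  moreover have "coeff g (Suc n) = 0" unfolding g_def using ff_deg[of "Suc n"] by simp
  ultimately have "degree g \<le> n" by (rule deg_drop)
  then obtain c where c: "g = (\<Sum>k\<le>n. smult (c k) (ff k))" using Suc.IH by blast
  define c' where "c' = c(Suc n := coeff f (Suc n))"
  have "(\<Sum>k\<le>n. smult (c' k) (ff k)) = (\<Sum>k\<le>n. smult (c k) (ff k))"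
    by (rule sum.cong) (auto simp: c'_def)
  then have "f = (\<Sum>k\<le>Suc n. smult (c' k) (ff k))"
    using c unfolding g_def by (simp add: c'_def algebra_simps)
  then show ?case by blast
qed

lemma ffval_le: "k \<le> m \<Longrightarrow> (\<Prod>i<k. int m - int i) = fact k * int (m choose k)"
proof (induction k)
  case 0 then show ?case by simp
next
  case (Suc k)
  have "(\<Prod>i<Suc k. int m - int i) = fact k * int (m choose k) * (int m - int k)"
    using Suc by simp
  also have "\<dots> = fact k * int ((m - k) * (m choose k))" using Suc.prems by (simp add: of_nat_diff)
  also have "(m - k) * (m choose k) = Suc k * (m choose Suc k)"
    by (metis binomial_absorb_comp binomial_absorption)
  finally show ?case by (simp add: algebra_simps)
qed

lemma ffval_gt: "m < k \<Longrightarrow> (\<Prod>i<k. int m - int i) = 0"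
  by (rule prod_zero) auto

lemma coeff_dvd:
  assumes "\<forall>a. M dvd poly f a" "f = (\<Sum>k\<le>n. smult (c k) (ff k))"
  shows "m \<le> n \<Longrightarrow> M dvd c m * fact m"
proof (induction m rule: less_induct)
  case (less m)
  have ev: "poly f (int m) = (\<Sum>k\<le>n. c k * (\<Prod>i<k. int m - int i))"
    using assms(2) by (simp add: poly_sum poly_ff)
  also have "\<dots> = c m * (\<Prod>i<m. int m - int i) + (\<Sum>k\<in>{..n}-{m}. c k * (\<Prod>i<k. int m - int i))"
    using less.prems by (subst sum.remove[of _ m]) auto
  finally have e: "poly f (int m) = c m * fact m + (\<Sum>k\<in>{..n}-{m}. c k * (\<Prod>i<k. int m - int i))"
    using ffval_le[of m m] by simp
  have "M dvd (\<Sum>k\<in>{..n}-{m}. c k * (\<Prod>i<k. int m - int i))"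
  proof (rule dvd_sum)
    fix k assume k: "k \<in> {..n}-{m}"
    show "M dvd c k * (\<Prod>i<k. int m - int i)"
    proof (cases "k < m")
      case True
      then have "M dvd c k * fact k" using less.IH less.prems by auto
      have eq: "c k * (\<Prod>i<k. int m - int i) = (c k * fact k) * int (m choose k)"
        using ffval_le[of k m] True by (simp add: mult.assoc)
      have "M dvd (c k * fact k) * int (m choose k)"
        using \<open>M dvd c k * fact k\<close> by (rule dvd_mult2)
      then show ?thesis by (subst eq)
    next
      case False
      then have "m < k" using k by auto
      then show ?thesis by (subst ffval_gt) simp_all
    qed
  qed
  moreover have "M dvd poly f (int m)" using assms(1) by blast
  ultimately have "M dvd poly f (int m) - (\<Sum>k\<in>{..n}-{m}. c k * (\<Prod>i<k. int m - int i))"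
    by (rule dvd_diff[rotated])
  then show ?case using e by simp
qed

lemma fact_val:
  assumes "prime p" 
  shows "k < p^2 \<Longrightarrow> \<exists>u. (fact k :: int) = int p ^ (k div p) * u \<and> coprime (int p) u"
proof (induction k)
  case 0 then show ?case by (intro exI[of _ 1]) simp
next
  case (Suc k)
  have pi: "prime (int p)" using assms by simp
  have p1: "p > 1" using assms prime_gt_1_nat by blast
  obtain u where u: "(fact k :: int) = int p ^ (k div p) * u" "coprime (int p) u" using Suc by auto
  have fs: "(fact (Suc k) :: int) = int (Suc k) * fact k" by simp
  show ?case
  proof (cases "p dvd Suc k")
    case True
    define j where "j = Suc k div p"
    have sk: "Suc k = p * j" using True unfolding j_def by simp
    have "j > 0" using sk by (cases j) auto
    have "p * j < p * p" using Suc.prems sk by (simp add: power2_eq_square)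
    then have "j < p" by simp
    have kk: "k = (p-1) + p*(j-1)" using sk \<open>j>0\<close> p1 by (cases j) (auto simp: algebra_simps)
    have "k div p = (j - 1) + (p-1) div p" unfolding kk by (rule div_mult_self2) (use p1 in simp)
    then have "k div p = j - 1" using p1 by simp
    then have "Suc k div p = k div p + 1" using \<open>j>0\<close> unfolding j_def by simp
    have "\<not> int p dvd int j" using \<open>j>0\<close> \<open>j<p\<close> by (simp add: nat_dvd_not_less)
    then have cj: "coprime (int p) (int j)" using pi prime_imp_coprime by blast
    have "(fact (Suc k) :: int) = int p ^ (Suc k div p) * (int j * u)"
      using fs u(1) sk \<open>Suc k div p = k div p + 1\<close> by (simp add: algebra_simps)
    moreover have "coprime (int p) (int j * u)" using cj u(2) by simp
    ultimately show ?thesis by blast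
  next
    case False
    have "Suc k div p = k div p" using False p1 by (simp add: div_Suc dvd_eq_mod_eq_0 gr0I)
    have "\<not> int p dvd int (Suc k)" using False by (simp only: int_dvd_int_iff simp_thms)
    then have cj: "coprime (int p) (int (Suc k))" using pi prime_imp_coprime by blast
    have "(fact (Suc k) :: int) = int p ^ (Suc k div p) * (int (Suc k) * u)"
      using fs u(1) \<open>Suc k div p = k div p\<close> by (simp add: algebra_simps)
    moreover have "coprime (int p) (int (Suc k) * u)" using cj u(2) by simp
    ultimately show ?thesis by blast
  qed
qed

lemma prod_perturb:
  fixes x y :: "'b \<Rightarrow> 'a::comm_ring_1"
  shows "finite A \<Longrightarrow> \<exists>z. (\<Prod>r\<in>A. x r + c * y r) = (\<Prod>r\<in>A. x r) + c * z"
proof (induction A rule: finite_induct)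
  case empty then show ?case by (intro exI[of _ 0]) simp
next
  case (insert a A)
  then obtain z where z: "(\<Prod>r\<in>A. x r + c * y r) = (\<Prod>r\<in>A. x r) + c * z" by blast
  show ?case
    by (intro exI[of _ "y a * ((\<Prod>r\<in>A. x r) + c * z) + x a * z"])
       (simp add: insert z algebra_simps)
qed

lemma lin_shift: "[:- int (j*p+r), 1:] = [:- int r, 1:] + [:int p:] * [:- int j:]"
  by (simp add: algebra_simps)

lemma block_mem:
  "(\<Prod>r<p. [:- int (j*p+r), 1:]) \<in> ideal_gen {[:int p:], ff p}"
proof -
  obtain z where z: "(\<Prod>r<p. [:- int r, 1:] + [:int p:] * [:- int j:]) = (\<Prod>r<p. [:- int r, 1:]) + [:int p:] * z"
    using prod_perturb[of "{..<p}" "\<lambda>r. [:- int r, 1:]" "[:int p:]" "\<lambda>r. [:- int j:]"] by auto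
  have "(\<Prod>r<p. [:- int (j*p+r), 1:]) = ff p + [:int p:] * z"
    unfolding lin_shift z ff_def by simp
  moreover have "ff p \<in> ideal_gen {[:int p:], ff p}" using gen_sub by blast
  moreover have "[:int p:] * z \<in> ideal_gen {[:int p:], ff p}"
    by (rule ideal_mult_right[OF is_ideal_gen]) (use gen_sub in blast)
  ultimately show ?thesis using ideal_add[OF is_ideal_gen] by metis
qed

lemma ff_qp_mem: "ff (q*p) \<in> ideal_pow (ideal_gen {[:int p:], ff p}) q"
proof (induction q)
  case 0 then show ?case by simp
next
  case (Suc q)
  have "ff (Suc q * p) = ff (q*p + p)" by (simp add: add.commute)
  also have "\<dots> = ff (q*p) * (\<Prod>r<p. [:- int (q*p+r), 1:])" unfolding ff_def by (rule prod_split)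
  finally have e: "ff (Suc q * p) = (\<Prod>r<p. [:- int (q*p+r), 1:]) * ff (q*p)" by (simp add: mult.commute)
  show ?case unfolding e by (rule pow_Suc_mem[OF block_mem Suc])
qed

lemma ff_mem: "ff k \<in> ideal_pow (ideal_gen {[:int p:], ff p}) (k div p)"
proof -
  have "ff k = ff ((k div p)*p + k mod p)" by simp
  also have "\<dots> = ff ((k div p)*p) * (\<Prod>r<k mod p. [:- int ((k div p)*p+r), 1:])"
    unfolding ff_def by (rule prod_split)
  finally show ?thesis using ideal_mult_right[OF is_ideal_pow ff_qp_mem] by metis
qed

lemma ff_big: "p^2 \<le> k \<Longrightarrow> ff k \<in> ideal_gen {ff (p^2)}"
proof -
  assume "p^2 \<le> k"
  then have "ff k = ff (p^2 + (k - p^2))" by simp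
  also have "\<dots> = ff (p^2) * (\<Prod>r<k - p^2. [:- int (p^2+r), 1:])"
    unfolding ff_def by (rule prod_split)
  finally show ?thesis using ideal_mult_right[OF is_ideal_gen, of "ff (p^2)" "{ff (p^2)}"] gen_sub by auto
qed

theorem mainTheorem18:
  fixes p :: nat
  assumes "prime p"
  shows "I_div (int p ^ (p + 1)) =
    ideal_sum
      (ideal_pow (ideal_gen {[:int p:], (\<Prod>i<p. [:- int i, 1:])}) (p + 1))
      (ideal_gen {\<Prod>i<p^2. [:- int i, 1:]})"
proof -
  define Ip where "Ip = ideal_gen {[:int p:], ff p}"
  define J where "J = ideal_sum (ideal_pow Ip (p + 1)) (ideal_gen {ff (p^2)})"
  have p0: "0 < p" using assms prime_gt_0_nat by blast
  have JI: "is_ideal J" unfolding J_def ideal_sum_def by (rule is_ideal_gen)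
  have powJ: "ideal_pow Ip (p+1) \<subseteq> J" unfolding J_def ideal_sum_def using gen_sub by blast
  have HJ: "ideal_gen {ff (p^2)} \<subseteq> J" unfolding J_def ideal_sum_def using gen_sub by blast
  have "I_div (int p ^ (p + 1)) = J"
  proof
    show "J \<subseteq> I_div (int p ^ (p + 1))"
      unfolding J_def ideal_sum_def
    proof (rule gen_least[OF I_div_ideal], rule Un_least)
      have "Ip \<subseteq> I_div (int p)" unfolding Ip_def
        by (rule gen_least[OF I_div_ideal]) (auto simp: I_div_def poly_ff consec_dvd[OF p0])
      then show "ideal_pow Ip (p + 1) \<subseteq> I_div (int p ^ (p + 1))" by (rule pow_sub)
      show "ideal_gen {ff (p^2)} \<subseteq> I_div (int p ^ (p + 1))"
        by (rule gen_least[OF I_div_ideal]) (use H_dvd[OF assms] in \<open>auto simp: I_div_def poly_ff simp del: power_Suc\<close>)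
    qed
  next
    show "I_div (int p ^ (p + 1)) \<subseteq> J"
    proof
      fix f assume f: "f \<in> I_div (int p ^ (p + 1))"
      obtain c where c: "f = (\<Sum>k\<le>degree f. smult (c k) (ff k))" using ff_expand by blast
      have dv: "\<And>k. k \<le> degree f \<Longrightarrow> int p ^ (p+1) dvd c k * fact k"
        by (rule coeff_dvd[OF _ c]) (use f in \<open>auto simp: I_div_def\<close>)
      have "(\<Sum>k\<le>degree f. smult (c k) (ff k)) \<in> J"
      proof (rule ideal_sum_closed[OF JI], simp)
        fix k assume k: "k \<in> {..degree f}"
        show "smult (c k) (ff k) \<in> J"
        proof (cases "p^2 \<le> k")
          case True
          have "ff k \<in> J" using ff_big[OF True] HJ by blast
          then have "[:c k:] * ff k \<in> J" by (rule ideal_mult[OF JI])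
          then show ?thesis by simp
        next
          case False
          define q where "q = k div p"
          have "q < p" unfolding q_def using False p0
            by (simp add: div_less_iff_less_mult power2_eq_square)
          obtain u where u: "(fact k :: int) = int p ^ q * u" "coprime (int p) u"
            using fact_val[OF assms, of k] False unfolding q_def by (meson not_le)
          have "int p ^ (p+1) dvd c k * fact k" using dv k by simp
          then have "int p ^ q * int p ^ (p+1-q) dvd int p ^ q * (c k * u)"
            using u \<open>q<p\<close> by (simp add: power_add[symmetric] algebra_simps)
          then have "int p ^ (p+1-q) dvd c k * u" using p0 by simp
          moreover have "coprime (int p ^ (p+1-q)) u" using u(2) by simp
          ultimately have "int p ^ (p+1-q) dvd c k" using coprime_dvd_mult_left_iff by blast
          then obtain d where d: "c k = int p ^ (p+1-q) * d" by blast
          have "smult d (ff k) \<in> ideal_pow Ip q"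
            using ideal_mult[OF is_ideal_pow ff_mem, of "[:d:]" k p] unfolding Ip_def q_def by simp
          then have "[:int p:] ^ (p+1-q) * smult d (ff k) \<in> ideal_pow Ip (q + (p+1-q))"
            by (rule pow_scale[rotated]) (simp add: Ip_def gen_sub[THEN subsetD])
          moreover have "q + (p+1-q) = p+1" using \<open>q<p\<close> by simp
          moreover have "[:int p:] ^ (p+1-q) * smult d (ff k) = smult (c k) (ff k)"
          proof -
            have pw: "[:int p:] ^ m = [:int p ^ m:]" for m by (induction m) simp_all
            show ?thesis unfolding d pw by (simp add: mult.commute)
          qed
          ultimately show ?thesis using powJ by auto
        qed
      qed
      then show "f \<in> J" using c by simp
    qed
  qed
  then show ?thesis unfolding J_def Ip_def ff_def .
qed

end
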